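(* Let $G$ be a $6$-regular graph, $\mathcal S$ a canonical path partition of $G$, and $P$ a path component of $\mathcal S$. Let $x_1,x_2\in V_2$ be path neighbors on $P$. If $x_1$ goes to a vertex $o$ that is an end-vertex of a path component $P'\neq P$, then $o$ is the only vertex that $x_2$ goes to.
   Context: All graphs are finite, simple and undirected. A path partition of $G=(V,E)$ is a set of vertex-disjoint paths (single vertices allowed) covering $V$; its members are components. A component with $t\ge3$ vertices is a cycle component if the subgraph induced on its vertex set has a spanning cycle; a one-vertex component is an isolated vertex; every other component is a path component. A path partition is canonical if (1) it has the minimum number of components among all path partitions of $G$; (2) among those, it has the maximum number of cycle components; (3) it has no isolated vertices. Given a canonical path partition $\mathcal S$ of $G$: two vertices are path neighbors if they are consecutive on a path component. An edge of $G$ is a free edge unless it joins two path neighbors or has both endpoints in the same cycle component. $V_1$ is the set of end-vertices of path components together with all vertices of cycle components. $V_2$ is the set of vertices not in $V_1$ that are joined by a free edge to a vertex of $V_1$. A balanced edge is a free edge with one endpoint in $V_1$ and the other in $V_2$; for $x\in V_2$, $y\in V_1$ we say $x$ goes to $y$ if $xy$ is a balanced edge. *)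

theory Defs
  imports Main
begin

definition simple_graph :: "'a set \<Rightarrow> ('a \<Rightarrow> 'a \<Rightarrow> bool) \<Rightarrow> bool" where
  "simple_graph V E \<longleftrightarrow> finite V \<and>
     (\<forall>u v. E u v \<longrightarrow> u \<in> V \<and> v \<in> V \<and> u \<noteq> v \<and> E v u)"

definition regular :: "'a set \<Rightarrow> ('a \<Rightarrow> 'a \<Rightarrow> bool) \<Rightarrow> nat \<Rightarrow> bool" where
  "regular V E k \<longleftrightarrow> (\<forall>v\<in>V. card {u. E v u} = k)"

definition is_path :: "('a \<Rightarrow> 'a \<Rightarrow> bool) \<Rightarrow> 'a list \<Rightarrow> bool" where
  "is_path E p \<longleftrightarrow> p \<noteq> [] \<and> distinct p \<and> (\<forall>i. Suc i < length p \<longrightarrow> E (p ! i) (p ! Suc i))"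

definition path_partition :: "'a set \<Rightarrow> ('a \<Rightarrow> 'a \<Rightarrow> bool) \<Rightarrow> 'a list set \<Rightarrow> bool" where
  "path_partition V E S \<longleftrightarrow>
     (\<forall>p\<in>S. is_path E p \<and> set p \<subseteq> V) \<and>
     (\<forall>p\<in>S. \<forall>q\<in>S. p \<noteq> q \<longrightarrow> set p \<inter> set q = {}) \<and>
     (\<Union>p\<in>S. set p) = V"

definition cycle_comp :: "('a \<Rightarrow> 'a \<Rightarrow> bool) \<Rightarrow> 'a list \<Rightarrow> bool" where
  "cycle_comp E p \<longleftrightarrow> length p \<ge> 3 \<and>
     (\<exists>c. distinct c \<and> set c = set p \<and>
          (\<forall>i. Suc i < length c \<longrightarrow> E (c ! i) (c ! Suc i)) \<and> E (last c) (hd c))"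

definition isolated_comp :: "'a list \<Rightarrow> bool" where
  "isolated_comp p \<longleftrightarrow> length p = 1"

definition path_comp :: "('a \<Rightarrow> 'a \<Rightarrow> bool) \<Rightarrow> 'a list \<Rightarrow> bool" where
  "path_comp E p \<longleftrightarrow> \<not> cycle_comp E p \<and> \<not> isolated_comp p"

definition num_cycles :: "('a \<Rightarrow> 'a \<Rightarrow> bool) \<Rightarrow> 'a list set \<Rightarrow> nat" where
  "num_cycles E S = card {p\<in>S. cycle_comp E p}"

definition canonical :: "'a set \<Rightarrow> ('a \<Rightarrow> 'a \<Rightarrow> bool) \<Rightarrow> 'a list set \<Rightarrow> bool" where
  "canonical V E S \<longleftrightarrow> path_partition V E S \<and>
     (\<forall>S'. path_partition V E S' \<longrightarrow> card S \<le> card S') \<and>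
     (\<forall>S'. path_partition V E S' \<and> card S' = card S \<longrightarrow> num_cycles E S' \<le> num_cycles E S) \<and>
     (\<forall>p\<in>S. \<not> isolated_comp p)"

definition consecutive_on :: "'a list \<Rightarrow> 'a \<Rightarrow> 'a \<Rightarrow> bool" where
  "consecutive_on p u v \<longleftrightarrow>
     (\<exists>i. Suc i < length p \<and> ((p ! i = u \<and> p ! Suc i = v) \<or> (p ! i = v \<and> p ! Suc i = u)))"

definition path_nbrs :: "('a \<Rightarrow> 'a \<Rightarrow> bool) \<Rightarrow> 'a list set \<Rightarrow> 'a \<Rightarrow> 'a \<Rightarrow> bool" where
  "path_nbrs E S u v \<longleftrightarrow> (\<exists>p\<in>S. path_comp E p \<and> consecutive_on p u v)"

definition same_cycle :: "('a \<Rightarrow> 'a \<Rightarrow> bool) \<Rightarrow> 'a list set \<Rightarrow> 'a \<Rightarrow> 'a \<Rightarrow> bool" where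
  "same_cycle E S u v \<longleftrightarrow> (\<exists>p\<in>S. cycle_comp E p \<and> u \<in> set p \<and> v \<in> set p)"

definition free_edge :: "('a \<Rightarrow> 'a \<Rightarrow> bool) \<Rightarrow> 'a list set \<Rightarrow> 'a \<Rightarrow> 'a \<Rightarrow> bool" where
  "free_edge E S u v \<longleftrightarrow> E u v \<and> \<not> path_nbrs E S u v \<and> \<not> same_cycle E S u v"

definition V1 :: "('a \<Rightarrow> 'a \<Rightarrow> bool) \<Rightarrow> 'a list set \<Rightarrow> 'a set" where
  "V1 E S = {v. \<exists>p\<in>S. path_comp E p \<and> (v = hd p \<or> v = last p)}
           \<union> {v. \<exists>p\<in>S. cycle_comp E p \<and> v \<in> set p}"

definition V2 :: "'a set \<Rightarrow> ('a \<Rightarrow> 'a \<Rightarrow> bool) \<Rightarrow> 'a list set \<Rightarrow> 'a set" where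
  "V2 V E S = {v\<in>V. v \<notin> V1 E S \<and> (\<exists>y\<in>V1 E S. free_edge E S v y)}"

definition balanced_edge :: "'a set \<Rightarrow> ('a \<Rightarrow> 'a \<Rightarrow> bool) \<Rightarrow> 'a list set \<Rightarrow> 'a \<Rightarrow> 'a \<Rightarrow> bool" where
  "balanced_edge V E S u v \<longleftrightarrow> free_edge E S u v \<and>
     ((u \<in> V1 E S \<and> v \<in> V2 V E S) \<or> (u \<in> V2 V E S \<and> v \<in> V1 E S))"

definition goes_to :: "'a set \<Rightarrow> ('a \<Rightarrow> 'a \<Rightarrow> bool) \<Rightarrow> 'a list set \<Rightarrow> 'a \<Rightarrow> 'a \<Rightarrow> bool" where
  "goes_to V E S x y \<longleftrightarrow> x \<in> V2 V E S \<and> y \<in> V1 E S \<and> balanced_edge V E S x y"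

end

theory Submission
  imports Defs
begin


lemma is_path_succ: "is_path E p \<longleftrightarrow> p \<noteq> [] \<and> distinct p \<and> successively E p"
  unfolding is_path_def successively_conv_nth by blast

lemma sym_E: "simple_graph V E \<Longrightarrow> (\<lambda>x y. E y x) = E"
  unfolding simple_graph_def by (auto intro!: ext)

lemma is_path_rev: "simple_graph V E \<Longrightarrow> is_path E p \<Longrightarrow> is_path E (rev p)"
  unfolding is_path_succ simple_graph_def by (auto elim: successively_mono)

lemma is_path_append: "is_path E xs \<Longrightarrow> is_path E ys \<Longrightarrow> E (last xs) (hd ys) \<Longrightarrow> set xs \<inter> set ys = {}
  \<Longrightarrow> is_path E (xs @ ys)"
  unfolding is_path_succ by (auto simp: successively_append_iff)

lemma is_path_appendD: "is_path E (xs @ ys) \<Longrightarrow> xs \<noteq> [] \<Longrightarrow> is_path E xs"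
  "is_path E (xs @ ys) \<Longrightarrow> ys \<noteq> [] \<Longrightarrow> is_path E ys"
  unfolding is_path_succ by (auto simp: successively_append_iff)

lemma is_path_single: "is_path E [x]"
  unfolding is_path_succ by simp



lemma finite_pp: "simple_graph V E \<Longrightarrow> path_partition V E S \<Longrightarrow> finite S"
  apply (rule finite_subset[OF _ finite_subset_distinct[of V]])
  unfolding simple_graph_def path_partition_def is_path_def by auto



lemma replace_pp:
  assumes pp: "path_partition V E S" and RS: "R \<subseteq> S" and Tp: "\<forall>q\<in>T. is_path E q"
    and Td: "\<forall>p\<in>T. \<forall>q\<in>T. p \<noteq> q \<longrightarrow> set p \<inter> set q = {}"
    and U: "(\<Union>q\<in>T. set q) = (\<Union>p\<in>R. set p)"
  shows "path_partition V E ((S - R) \<union> T)" "(S - R) \<inter> T = {}"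
proof -
  have pS1: "\<And>p. p\<in>S \<Longrightarrow> is_path E p \<and> set p \<subseteq> V" 
    and pS2: "\<And>p q. p\<in>S \<Longrightarrow> q\<in>S \<Longrightarrow> p \<noteq> q \<Longrightarrow> set p \<inter> set q = {}"
    and pS3: "(\<Union>p\<in>S. set p) = V" using pp unfolding path_partition_def by auto
  have ne: "\<And>q. q \<in> T \<Longrightarrow> q \<noteq> []" using Tp unfolding is_path_def by auto
  have sub: "\<And>q. q \<in> T \<Longrightarrow> set q \<subseteq> (\<Union>p\<in>R. set p)" using U by blast
  have X: "set p \<inter> set q = {}" if "p \<in> S - R" "q \<in> T" for p q
  proof -
    have "set p \<inter> set r = {}" if "r \<in> R" for r using pS2[of p r] that \<open>p \<in> S - R\<close> RS by auto
    then show ?thesis using sub[OF \<open>q \<in> T\<close>] by blast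
  qed
  show D: "(S - R) \<inter> T = {}"
  proof (rule ccontr)
    assume "(S - R) \<inter> T \<noteq> {}"
    then obtain q where q: "q \<in> S - R" "q \<in> T" by blast
    have "set q = {}" using X[OF q] by simp
    then show False using ne[OF q(2)] by simp
  qed
  have RV: "(\<Union>p\<in>R. set p) \<subseteq> V" using pS3 RS by blast
  show "path_partition V E ((S - R) \<union> T)"
    unfolding path_partition_def
  proof (intro conjI)
    show "\<forall>p\<in>S - R \<union> T. is_path E p \<and> set p \<subseteq> V"
    proof
      fix p assume "p \<in> S - R \<union> T"
      then show "is_path E p \<and> set p \<subseteq> V"
      proof
        assume "p \<in> S - R" then show ?thesis using pS1 by blast
      next
        assume "p \<in> T" then show ?thesis using Tp sub[of p] RV by blast
      qed
    qed
    show "\<forall>p\<in>S - R \<union> T. \<forall>q\<in>S - R \<union> T. p \<noteq> q \<longrightarrow> set p \<inter> set q = {}"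
    proof (intro ballI impI)
      fix p q assume a: "p \<in> S - R \<union> T" "q \<in> S - R \<union> T" "p \<noteq> q"
      show "set p \<inter> set q = {}"
      proof (cases "p \<in> T")
        case True
        then show ?thesis
        proof (cases "q \<in> T")
          case True then show ?thesis using Td a \<open>p \<in> T\<close> by blast
        next
          case False then have "q \<in> S - R" using a by blast
          then show ?thesis using X[of q p] \<open>p \<in> T\<close> by blast
        qed
      next
        case False then have p: "p \<in> S - R" using a by blast
        show ?thesis
        proof (cases "q \<in> T")
          case True then show ?thesis using X[OF p] by blast
        next
          case False then have "q \<in> S - R" using a by blast
          then show ?thesis using pS2 p a(3) by blast
        qed
      qed
    qed
    have "(\<Union>p\<in>S - R \<union> T. set p) = (\<Union>p\<in>S - R. set p) \<union> (\<Union>p\<in>T. set p)" by blast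
    also have "\<dots> = (\<Union>p\<in>S - R. set p) \<union> (\<Union>p\<in>R. set p)" using U by simp
    also have "\<dots> = (\<Union>p\<in>S. set p)" using RS by blast
    finally show "(\<Union>p\<in>S - R \<union> T. set p) = V" using pS3 by simp
  qed
qed


lemma split_at2: "Suc i < length p \<Longrightarrow> p = take i p @ [p!i, p!Suc i] @ drop (Suc (Suc i)) p"
proof -
  assume a: "Suc i < length p"
  have "p = take i p @ drop i p" by simp
  also have "drop i p = p!i # drop (Suc i) p" using a by (simp add: Cons_nth_drop_Suc)
  also have "drop (Suc i) p = p!Suc i # drop (Suc (Suc i)) p" using a by (simp add: Cons_nth_drop_Suc)
  finally show ?thesis by simp
qed

lemma card_replace: "finite S \<Longrightarrow> finite T \<Longrightarrow> R \<subseteq> S \<Longrightarrow> (S - R) \<inter> T = {} \<Longrightarrow>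
   card ((S - R) \<union> T) + card R = card S + card T"
proof -
  assume a: "finite S" "finite T" "R \<subseteq> S" "(S - R) \<inter> T = {}"
  have "card ((S - R) \<union> T) = card (S - R) + card T" using a by (simp add: card_Un_disjoint)
  moreover have "card (S - R) = card S - card R" using a by (simp add: card_Diff_subset finite_subset)
  moreover have "card R \<le> card S" using a by (simp add: card_mono)
  ultimately show ?thesis by simp
qed

lemma orient: "simple_graph V E \<Longrightarrow> is_path E p \<Longrightarrow> y = hd p \<or> y = last p \<Longrightarrow>
   \<exists>q. is_path E q \<and> set q = set p \<and> hd q = y \<and> last q = (if y = hd p then last p else hd p)"
proof -
  assume a: "simple_graph V E" "is_path E p" "y = hd p \<or> y = last p"
  have ne: "p \<noteq> []" using a(2) unfolding is_path_def by simp
  show ?thesis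
  proof (cases "y = hd p")
    case True then show ?thesis using a by auto
  next
    case False then have "y = last p" using a by simp
    then show ?thesis using False is_path_rev[OF a(1,2)] ne by (intro exI[of _ "rev p"]) (simp add: hd_rev last_rev)
  qed
qed

lemma cyc_rot: assumes "cycle_comp E p" "y \<in> set p"
  shows "\<exists>q. is_path E q \<and> set q = set p \<and> hd q = y"
proof -
  obtain c where c: "distinct c" "set c = set p" "successively E c" "E (last c) (hd c)"
    using assms(1) unfolding cycle_comp_def successively_conv_nth by blast
  obtain c1 c2 where cs: "c = c1 @ y # c2" using assms(2) c(2) by (metis split_list)
  show ?thesis
  proof (cases "c1 = []")
    case True then show ?thesis using c cs by (intro exI[of _ c]) (simp add: is_path_succ)
  next
    case False
    have s1: "successively E c1" and s2: "successively E (y # c2)" and j: "E (last c1) y"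
      using c(3) False unfolding cs by (simp_all add: successively_append_iff)
    have w: "E (last (y # c2)) (hd c1)" using c(4) False unfolding cs by (simp add: hd_append)
    have "successively E ((y # c2) @ c1)"
      using s1 s2 w False by (subst successively_append_iff) simp
    moreover have "distinct (y # c2 @ c1)" "set (y # c2 @ c1) = set c" using c(1) cs by auto
    ultimately show ?thesis using c(2) by (intro exI[of _ "y # c2 @ c1"]) (simp add: is_path_succ)
  qed
qed


lemma consec_iff2: "consecutive_on p u v \<longleftrightarrow> (\<exists>xs ys. p = xs @ [u,v] @ ys \<or> p = xs @ [v,u] @ ys)"
proof
  assume "consecutive_on p u v"
  then obtain i where i: "Suc i < length p" "(p ! i = u \<and> p ! Suc i = v) \<or> (p ! i = v \<and> p ! Suc i = u)"
    unfolding consecutive_on_def by blast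
  have e: "p = take i p @ [p!i, p!Suc i] @ drop (Suc (Suc i)) p" using split_at2[OF i(1)] .
  show "\<exists>xs ys. p = xs @ [u,v] @ ys \<or> p = xs @ [v,u] @ ys"
  proof (intro exI)
    show "p = take i p @ [u,v] @ drop (Suc (Suc i)) p \<or> p = take i p @ [v,u] @ drop (Suc (Suc i)) p"
      using i(2) e by auto
  qed
next
  assume "\<exists>xs ys. p = xs @ [u,v] @ ys \<or> p = xs @ [v,u] @ ys"
  then obtain xs ys where "p = xs @ [u,v] @ ys \<or> p = xs @ [v,u] @ ys" by blast
  then show "consecutive_on p u v" unfolding consecutive_on_def
    by (intro exI[of _ "length xs"]) (auto simp: nth_append)
qed

lemma consec_rev1: "consecutive_on p u v \<Longrightarrow> consecutive_on (rev p) u v"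
proof -
  assume "consecutive_on p u v"
  then obtain xs ys where "p = xs @ [u,v] @ ys \<or> p = xs @ [v,u] @ ys" unfolding consec_iff2 by blast
  then have "rev p = rev ys @ [v,u] @ rev xs \<or> rev p = rev ys @ [u,v] @ rev xs" by auto
  then show ?thesis unfolding consec_iff2 by blast
qed

lemma consec_rev: "consecutive_on (rev p) u v = consecutive_on p u v"
  using consec_rev1[of p] consec_rev1[of "rev p"] by auto

lemma hd_last_ne: "is_path E p \<Longrightarrow> \<not> isolated_comp p \<Longrightarrow> hd p \<noteq> last p"
proof -
  assume a: "is_path E p" "\<not> isolated_comp p"
  then obtain a b r where "p = a # b # r" unfolding is_path_def isolated_comp_def
    by (metis One_nat_def length_Cons list.size(3) neq_Nil_conv)
  then show ?thesis using a unfolding is_path_def by (metis distinct.simps(2) last.simps list.discI list.sel(1) last_in_set)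
qed


theorem mainTheorem9:
  fixes V :: "'a set" and E :: "'a \<Rightarrow> 'a \<Rightarrow> bool" and S :: "'a list set"
    and P P' :: "'a list" and x1 x2 z :: 'a
  assumes "simple_graph V E"
    and "regular V E 6"
    and "canonical V E S"
    and "P \<in> S" and "path_comp E P"
    and "x1 \<in> V2 V E S" and "x2 \<in> V2 V E S"
    and "consecutive_on P x1 x2"
    and "goes_to V E S x1 z"
    and "P' \<in> S" and "path_comp E P'" and "P' \<noteq> P"
    and "z = hd P' \<or> z = last P'"
  shows "{y. goes_to V E S x2 y} = {z}"
proof -
  note sg = assms(1)
  have Esym: "\<And>u v. E u v \<Longrightarrow> E v u" using sg unfolding simple_graph_def by blast
  have pp: "path_partition V E S" and minc: "\<And>S'. path_partition V E S' \<Longrightarrow> card S \<le> card S'"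
    and maxc: "\<And>S'. path_partition V E S' \<Longrightarrow> card S' = card S \<Longrightarrow> num_cycles E S' \<le> num_cycles E S"
    using assms(3) unfolding canonical_def by auto
  have finS: "finite S" using finite_pp[OF sg pp] .
  have Sp: "\<And>p. p \<in> S \<Longrightarrow> is_path E p" using pp unfolding path_partition_def by blast
  have Sd: "\<And>p q. p \<in> S \<Longrightarrow> q \<in> S \<Longrightarrow> p \<noteq> q \<Longrightarrow> set p \<inter> set q = {}"
    using pp unfolding path_partition_def by blast
  have PnC: "\<not> cycle_comp E P" "\<not> cycle_comp E P'" using assms(5,11) unfolding path_comp_def by auto
  have PP'd: "set P \<inter> set P' = {}" using Sd assms(4,10,12) by blast
  have x1n: "x1 \<notin> V1 E S" and x2n: "x2 \<notin> V1 E S" using assms(6,7) unfolding V2_def by auto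
  have hdP: "hd P \<in> V1 E S" "last P \<in> V1 E S" using assms(4,5) unfolding V1_def by auto
  have Ex1z: "E x1 z" using assms(9) unfolding goes_to_def balanced_edge_def free_edge_def by blast
  obtain Po where Po: "is_path E Po" "set Po = set P'" "hd Po = z"
    "last Po = (if z = hd P' then last P' else hd P')"
    using orient[OF sg Sp[OF assms(10)] assms(13)] by blast
  define z' where "z' = last Po"
  have zz': "z' \<noteq> z" using hd_last_ne[of E P'] Sp[OF assms(10)] assms(11,13) Po(4)
    unfolding z'_def path_comp_def by auto
  have z'end: "\<And>y. y = hd P' \<or> y = last P' \<Longrightarrow> y \<noteq> z \<Longrightarrow> y = z'"
    using Po(4) assms(13) unfolding z'_def by auto
  obtain P0 A B where P0: "P0 = A @ [x1,x2] @ B" "is_path E P0" "set P0 = set P"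
    "(hd P0 = hd P \<and> last P0 = last P) \<or> (hd P0 = last P \<and> last P0 = hd P)"
    "\<And>u v. consecutive_on P0 u v = consecutive_on P u v"
  proof -
    obtain xs ys where "P = xs @ [x1,x2] @ ys \<or> P = xs @ [x2,x1] @ ys"
      using assms(8) unfolding consec_iff2 by blast
    then show ?thesis
    proof
      assume "P = xs @ [x1,x2] @ ys" then show ?thesis using that[of P xs ys] Sp[OF assms(4)] by blast
    next
      assume h: "P = xs @ [x2,x1] @ ys"
      have "rev P = rev ys @ [x1,x2] @ rev xs" using h by simp
      moreover have "P \<noteq> []" using h by simp
      moreover have "hd (rev P) = last P" "last (rev P) = hd P" "set (rev P) = set P"
        using \<open>P \<noteq> []\<close> by (auto simp: hd_rev last_rev)
      ultimately show ?thesis using that[of "rev P" "rev ys" "rev xs"] is_path_rev[OF sg Sp[OF assms(4)]]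
        consec_rev[of P] by presburger
    qed
  qed
  have dP0: "distinct P0" using P0(2) unfolding is_path_def by blast
  have hdP0: "hd P0 \<in> V1 E S" "last P0 \<in> V1 E S" using P0(4) hdP by auto
  have Ane: "A \<noteq> []" using hdP0(1) x1n P0(1) by (cases A) auto
  have Bne: "B \<noteq> []" using hdP0(2) x2n P0(1) by (cases B) auto
  have split2: "P0 = (A @ [x1]) @ (x2 # B)" using P0(1) by simp
  have pA: "is_path E (A @ [x1])" using is_path_appendD(1)[OF P0(2)[unfolded split2]] by simp
  have pB: "is_path E (x2 # B)" using is_path_appendD(2)[OF P0(2)[unfolded split2]] by simp
  have dist: "set A \<inter> set B = {}" "x1 \<notin> set A" "x1 \<notin> set B" "x2 \<notin> set A" "x2 \<notin> set B" "x1 \<noteq> x2"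
    using dP0 P0(1) by auto
  have setP: "set P = set A \<union> {x1, x2} \<union> set B" using P0(1,3) by auto
  define T1 where "T1 = A @ [x1] @ Po"
  have pT1: "is_path E T1" unfolding T1_def using is_path_append[OF pA Po(1)] Ex1z Po(2,3) PP'd setP by auto
  have setT1: "set T1 = set A \<union> {x1} \<union> set P'" unfolding T1_def using Po(2) by auto
  have main: "y = z" if gy: "goes_to V E S x2 y" for y
  proof (rule ccontr)
    assume yz: "y \<noteq> z"
    have Ey: "E x2 y" and npn: "\<not> path_nbrs E S x2 y" and yV1: "y \<in> V1 E S"
      using gy unfolding goes_to_def balanced_edge_def free_edge_def by auto
    have other: False if C: "C \<in> S" "C \<noteq> P" "C \<noteq> P'" "is_path E Cy" "set Cy = set C" "hd Cy = y" for C Cy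
    proof -
      have CP: "set C \<inter> set P = {}" "set C \<inter> set P' = {}" using Sd C(1,2,3) assms(4,10) by blast+
      define T2 where "T2 = rev Cy @ (x2 # B)"
      have Cyne: "Cy \<noteq> []" using C(4) unfolding is_path_def by simp
      have pT2: "is_path E T2" unfolding T2_def
        by (rule is_path_append[OF is_path_rev[OF sg C(4)] pB])
           (use Cyne C(5,6) Esym[OF Ey] CP setP in \<open>auto simp: last_rev\<close>)
      have setT2: "set T2 = set C \<union> {x2} \<union> set B" unfolding T2_def using C(5) by auto
      have D12: "set T1 \<inter> set T2 = {}" unfolding setT1 setT2 using dist CP PP'd setP by blast
      have T12: "T1 \<noteq> T2" using D12 pT1 unfolding is_path_def by (cases T1) auto
      let ?R = "{P, P', C}" and ?T = "{T1, T2}"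
      have RS: "?R \<subseteq> S" using C(1) assms(4,10) by blast
      have U: "(\<Union>q\<in>?T. set q) = (\<Union>p\<in>?R. set p)" using setT1 setT2 setP by auto
      have Td: "\<forall>p\<in>?T. \<forall>q\<in>?T. p \<noteq> q \<longrightarrow> set p \<inter> set q = {}" using D12 by auto
      have Tp: "\<forall>q\<in>?T. is_path E q" using pT1 pT2 by auto
      note r = replace_pp[OF pp RS Tp Td U]
      have "card ((S - ?R) \<union> ?T) + card ?R = card S + card ?T"
        by (rule card_replace[OF finS _ RS r(2)]) simp
      moreover have "card ?R = 3" using C(2,3) assms(12) by auto
      moreover have "card ?T = 2" using T12 by auto
      ultimately have "card ((S - ?R) \<union> ?T) < card S" by simp
      then show False using minc[OF r(1)] by simp
    qed
    from yV1 consider (pc) p where "p \<in> S" "path_comp E p" "y = hd p \<or> y = last p"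
      | (cc) p where "p \<in> S" "cycle_comp E p" "y \<in> set p" unfolding V1_def by blast
    then show False
    proof cases
      case cc
      then have "p \<noteq> P" "p \<noteq> P'" using PnC by auto
      then show False using cyc_rot[OF cc(2,3)] other[OF cc(1)] by blast
    next
      case pc
      consider "p = P" | "p = P'" | "p \<noteq> P" "p \<noteq> P'" by blast
      then show False
      proof cases
        case 3
        then show False using orient[OF sg Sp[OF pc(1)] pc(3)] other[OF pc(1) 3] by blast
      next
        case 2
        then have yz': "y = z'" using z'end pc(3) yz by blast
        define Q where "Q = T1 @ (x2 # B)"
        have pQ: "is_path E Q" unfolding Q_def
          by (rule is_path_append[OF pT1 pB])
             (use Esym[OF Ey] yz' setT1 setP dist PP'd Po(2) Po(1)[unfolded is_path_def] in \<open>auto simp: T1_def z'_def\<close>)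
        let ?R = "{P, P'}" and ?T = "{Q}"
        have RS: "?R \<subseteq> S" using assms(4,10) by blast
        have U: "(\<Union>q\<in>?T. set q) = (\<Union>p\<in>?R. set p)" using setT1 setP unfolding Q_def by auto
        note r = replace_pp[OF pp RS _ _ U]
        have r1: "path_partition V E ((S - ?R) \<union> ?T)" and r2: "(S - ?R) \<inter> ?T = {}"
          using r pQ by auto
        have "card ((S - ?R) \<union> ?T) + card ?R = card S + card ?T"
          by (rule card_replace[OF finS _ RS r2]) simp
        moreover have "card ?R = 2" using assms(12) by auto
        ultimately have "card ((S - ?R) \<union> ?T) < card S" by simp
        then show False using minc[OF r1] by simp
      next
        case 1
        then have "y = hd P0 \<or> y = last P0" using pc(3) P0(4) by auto
        then show False
        proof
          assume yh: "y = hd P0"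
          then have yA: "y = hd A" using P0(1) Ane by simp
          define Q where "Q = rev Po @ rev (A @ [x1]) @ (x2 # B)"
          have p1: "is_path E (rev (A @ [x1]) @ (x2 # B))"
            by (rule is_path_append[OF is_path_rev[OF sg pA] pB])
               (use Esym[OF Ey] yA Ane dist in \<open>auto simp: last_rev hd_rev\<close>)
          have pQ: "is_path E Q" unfolding Q_def
            by (rule is_path_append[OF is_path_rev[OF sg Po(1)] p1])
               (use Esym[OF Ex1z] Po(2,3) PP'd setP Po(1) in \<open>auto simp: last_rev is_path_def\<close>)
          let ?R = "{P, P'}" and ?T = "{Q}"
          have RS: "?R \<subseteq> S" using assms(4,10) by blast
          have U: "(\<Union>q\<in>?T. set q) = (\<Union>p\<in>?R. set p)" using setP Po(2) unfolding Q_def by auto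
          note r = replace_pp[OF pp RS _ _ U]
          have r1: "path_partition V E ((S - ?R) \<union> ?T)" and r2: "(S - ?R) \<inter> ?T = {}"
            using r pQ by auto
          have "card ((S - ?R) \<union> ?T) + card ?R = card S + card ?T"
            by (rule card_replace[OF finS _ RS r2]) simp
          moreover have "card ?R = 2" using assms(12) by auto
          ultimately have "card ((S - ?R) \<union> ?T) < card S" by simp
          then show False using minc[OF r1] by simp
        next
          assume yl: "y = last P0"
          then have yB: "y = last B" using P0(1) Bne by simp
          have lenB: "length B \<ge> 2"
          proof (rule ccontr)
            assume "\<not> length B \<ge> 2"
            then have "B = [y]" using Bne yB by (cases B) (auto simp: Suc_le_eq)
            then have "consecutive_on P0 x2 y" unfolding consec_iff2 P0(1)
              by (intro exI[of _ "A @ [x1]"] exI[of _ "[]"]) simp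
            then have "path_nbrs E S x2 y" unfolding path_nbrs_def using P0(5) assms(4,5) by blast
            then show False using npn by simp
          qed
          define T2 where "T2 = x2 # B"
          have cT2: "cycle_comp E T2" unfolding cycle_comp_def
          proof (intro conjI exI[of _ T2])
            show "3 \<le> length T2" using lenB unfolding T2_def by simp
            show "distinct T2" "set T2 = set T2" using pB unfolding T2_def is_path_def by auto
            show "\<forall>i. Suc i < length T2 \<longrightarrow> E (T2 ! i) (T2 ! Suc i)" using pB unfolding T2_def is_path_def by blast
            show "E (last T2) (hd T2)" using Esym[OF Ey] yB Bne unfolding T2_def by simp
          qed
          have D12: "set T1 \<inter> set T2 = {}" unfolding setT1 T2_def using dist PP'd setP by auto
          have T12: "T1 \<noteq> T2" using D12 pT1 unfolding is_path_def by (cases T1) auto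
          let ?R = "{P, P'}" and ?T = "{T1, T2}"
          have RS: "?R \<subseteq> S" using assms(4,10) by blast
          have U: "(\<Union>q\<in>?T. set q) = (\<Union>p\<in>?R. set p)" using setT1 setP unfolding T2_def by auto
          have Td: "\<forall>p\<in>?T. \<forall>q\<in>?T. p \<noteq> q \<longrightarrow> set p \<inter> set q = {}" using D12 by auto
          have Tp: "\<forall>q\<in>?T. is_path E q" using pT1 pB unfolding T2_def by auto
          note r = replace_pp[OF pp RS Tp Td U]
          define S' where "S' = (S - ?R) \<union> ?T"
          have "card S' + card ?R = card S + card ?T"
            unfolding S'_def by (rule card_replace[OF finS _ RS r(2)]) simp
          moreover have "card ?R = 2" using assms(12) by auto
          moreover have "card ?T = 2" using T12 by auto
          ultimately have cS': "card S' = card S" by simp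
          have finS': "finite S'" using finite_pp[OF sg r(1)] unfolding S'_def .
          have T2S: "T2 \<notin> S"
          proof
            assume "T2 \<in> S"
            then have "T2 \<in> ?R" using r(2) by auto
            then show False using cT2 PnC by auto
          qed
          have "insert T2 {p\<in>S. cycle_comp E p} \<subseteq> {p\<in>S'. cycle_comp E p}"
            using cT2 PnC unfolding S'_def by auto
          then have "card (insert T2 {p\<in>S. cycle_comp E p}) \<le> card {p\<in>S'. cycle_comp E p}"
            using finS' by (intro card_mono) auto
          then have "num_cycles E S < num_cycles E S'" unfolding num_cycles_def
            using T2S finS by simp
          then show False using maxc[OF r(1)[folded S'_def] cS'] by simp
        qed
      qed
    qed
  qed
  obtain y0 where y0: "y0 \<in> V1 E S" "free_edge E S x2 y0" using assms(7) unfolding V2_def by blast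
  have "goes_to V E S x2 y0" unfolding goes_to_def balanced_edge_def using y0 assms(7) by blast
  then have "goes_to V E S x2 z" using main by blast
  then show ?thesis using main by blast
qed
end
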